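(* For every integer $d\ge2$: (1) $\mathcal{VC}_{V_d}(V_{[0,1/d)})=\mathcal C_{V_d}(V_{[0,1/d)})=V_{[1/d,1]}$; (2) $\mathcal{VC}_{V_d}(V_{[1/d,1]})=\mathcal C_{V_d}(V_{[1/d,1]})=V_{[0,1/d)}$; (3) $\mathcal{VC}_{T_d}(T_{[0,1/d)})=\mathcal C_{T_d}(T_{[0,1/d)})=T_{[1/d,1]}$; (4) $\mathcal{VC}_{T_d}(T_{[1/d,1]})=\mathcal C_{T_d}(T_{[1/d,1]})=T_{[0,1/d)}$. In particular $(L(V_{[0,1/d)})'\cap L(V_d))'\cap L(V_d)=L(V_{[0,1/d)})$ and $(L(T_{[0,1/d)})'\cap L(T_d))'\cap L(T_d)=L(T_{[0,1/d)})$.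
   Context: $V_d$ is the Higman–Thompson group of piecewise affine bijections of $[0,1)$ with finitely many $d$-adic breakpoints and slopes powers of $d$; $T_d$ its subgroup of elements inducing circle homeomorphisms. $V_{[0,1/d)}$ (resp. $V_{[1/d,1]}$) is the subgroup of $V_d$ of elements acting as the identity on $[0,1/d)$ (resp. on $[1/d,1)$); $T_{[0,1/d)}$, $T_{[1/d,1]}$ are defined likewise in $T_d$. For $H\le G$: $\mathcal C_G(H)=\{g\in G:h^{-1}gh=g\ \forall h\in H\}$ and the virtual centralizer $\mathcal{VC}_G(H)=\{g\in G:\{h^{-1}gh:h\in H\}\text{ is finite}\}$. For $A\subseteq L(G)$, $A'\cap L(G)$ is the relative commutant. *)

theory Defs
  imports Complex_Main "HOL-Algebra.Group"
begin

definition dadic :: "nat \<Rightarrow> real set" where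
  "dadic d = {of_int m / (real d) ^ k | m k. True}"

text \<open>Elements of the Higman--Thompson group V_d, realised as maps real to real
  which are bijections of [0,1) and the identity outside [0,1).  Pieces are
  half-open intervals [a_i, a_(i+1)) with d-adic breakpoints, on which f is affine
  with slope a (possibly negative) integer power of d.\<close>
definition HT_V :: "nat \<Rightarrow> (real \<Rightarrow> real) set" where
  "HT_V d = {f. bij_betw f {0..<1} {0..<1} \<and> (\<forall>x. x \<notin> {0..<1} \<longrightarrow> f x = x) \<and>
     (\<exists>(a :: nat \<Rightarrow> real) (n :: nat) (k :: nat \<Rightarrow> int) (b :: nat \<Rightarrow> real).
        a 0 = 0 \<and> a n = 1 \<and> (\<forall>i<n. a i < a (Suc i)) \<and> (\<forall>i\<le>n. a i \<in> dadic d) \<and>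
        (\<forall>i<n. \<forall>x\<in>{a i..<a (Suc i)}. f x = (real d) powi (k i) * x + b i))}"

text \<open>T_d: elements of V_d inducing homeomorphisms of the circle R/Z, i.e. the
  induced map on the circle (via t \<mapsto> exp(2 pi i t)) is continuous.\<close>
definition HT_T :: "nat \<Rightarrow> (real \<Rightarrow> real) set" where
  "HT_T d = {f \<in> HT_V d. continuous_on UNIV (\<lambda>x. cis (2 * pi * f (frac x)))}"

definition Vgrp :: "nat \<Rightarrow> (real \<Rightarrow> real) monoid" where
  "Vgrp d = \<lparr>carrier = HT_V d, mult = (\<circ>), one = id\<rparr>"

definition Tgrp :: "nat \<Rightarrow> (real \<Rightarrow> real) monoid" where
  "Tgrp d = \<lparr>carrier = HT_T d, mult = (\<circ>), one = id\<rparr>"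

definition fix_on :: "(real \<Rightarrow> real) set \<Rightarrow> real set \<Rightarrow> (real \<Rightarrow> real) set" where
  "fix_on G S = {g \<in> G. \<forall>x\<in>S. g x = x}"

definition centralizer :: "('a, 'b) monoid_scheme \<Rightarrow> 'a set \<Rightarrow> 'a set" where
  "centralizer G H = {g \<in> carrier G. \<forall>h\<in>H. inv\<^bsub>G\<^esub> h \<otimes>\<^bsub>G\<^esub> g \<otimes>\<^bsub>G\<^esub> h = g}"

definition virtual_centralizer :: "('a, 'b) monoid_scheme \<Rightarrow> 'a set \<Rightarrow> 'a set" where
  "virtual_centralizer G H =
     {g \<in> carrier G. finite {inv\<^bsub>G\<^esub> h \<otimes>\<^bsub>G\<^esub> g \<otimes>\<^bsub>G\<^esub> h | h. h \<in> H}}"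

end

theory Submission
  imports Defs "HOL-Analysis.Analysis"
begin


lemma minv_fun:
  fixes h :: "'a \<Rightarrow> 'a"
  assumes "h \<in> carrier M" "bij h" "inv_into UNIV h \<in> carrier M"
    and mM: "\<And>x y. x \<otimes>\<^bsub>M\<^esub> y = x \<circ> y" and oM: "\<one>\<^bsub>M\<^esub> = id"
  shows "inv\<^bsub>M\<^esub> h = inv_into UNIV h"
  unfolding m_inv_def
proof (rule the_equality)
  have "h \<circ> inv_into UNIV h = id" using assms(2) bij_is_surj surj_iff by blast
  moreover have "inv_into UNIV h \<circ> h = id" using assms(2) bij_is_inj inv_o_cancel by blast
  ultimately show "inv_into UNIV h \<in> carrier M \<and> h \<otimes>\<^bsub>M\<^esub> inv_into UNIV h = \<one>\<^bsub>M\<^esub> \<and> inv_into UNIV h \<otimes>\<^bsub>M\<^esub> h = \<one>\<^bsub>M\<^esub>"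
    using assms by simp
next
  fix y assume "y \<in> carrier M \<and> h \<otimes>\<^bsub>M\<^esub> y = \<one>\<^bsub>M\<^esub> \<and> y \<otimes>\<^bsub>M\<^esub> h = \<one>\<^bsub>M\<^esub>"
  then have "y \<circ> h = id" "h \<circ> y = id" by (simp_all add: mM oM)
  then show "y = inv_into UNIV h" using inv_unique_comp by metis
qed

lemma Vgrp_simps: "x \<otimes>\<^bsub>Vgrp d\<^esub> y = x \<circ> y" "\<one>\<^bsub>Vgrp d\<^esub> = id" "carrier (Vgrp d) = HT_V d"
  by (simp_all add: Vgrp_def)
lemma Tgrp_simps: "x \<otimes>\<^bsub>Tgrp d\<^esub> y = x \<circ> y" "\<one>\<^bsub>Tgrp d\<^esub> = id" "carrier (Tgrp d) = HT_T d"
  by (simp_all add: Tgrp_def)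

section \<open>d-adic numbers\<close>

lemma dadic_int: "real_of_int m \<in> dadic d"
  unfolding dadic_def by (rule CollectI, rule exI[of _ m], rule exI[of _ 0]) simp

lemma dadic_0: "0 \<in> dadic d" using dadic_int[of 0 d] by simp
lemma dadic_1: "1 \<in> dadic d" using dadic_int[of 1 d] by simp

lemma dadic_add:
  assumes "d > 0" "x \<in> dadic d" "y \<in> dadic d" shows "x + y \<in> dadic d"
proof -
  obtain m1 k1 where 1: "x = of_int m1 / real d ^ k1" using assms(2) unfolding dadic_def by blast
  obtain m2 k2 where 2: "y = of_int m2 / real d ^ k2" using assms(3) unfolding dadic_def by blast
  have "x + y = of_int (m1 * int d ^ k2 + m2 * int d ^ k1) / real d ^ (k1 + k2)"
    using assms(1) by (simp add: 1 2 field_simps power_add)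
  then show ?thesis unfolding dadic_def by blast
qed

lemma dadic_uminus:
  assumes "x \<in> dadic d" shows "- x \<in> dadic d"
proof -
  obtain m1 k1 where 1: "x = of_int m1 / real d ^ k1" using assms unfolding dadic_def by blast
  have "- x = of_int (- m1) / real d ^ k1" by (simp add: 1)
  then show ?thesis unfolding dadic_def by blast
qed

lemma dadic_diff:
  assumes "d > 0" "x \<in> dadic d" "y \<in> dadic d" shows "x - y \<in> dadic d"
  using dadic_add[OF assms(1,2) dadic_uminus[OF assms(3)]] by simp

lemma dadic_powi:
  assumes "d > 0" "x \<in> dadic d" shows "real d powi k * x \<in> dadic d"
proof -
  obtain m1 k1 where 1: "x = of_int m1 / real d ^ k1" using assms(2) unfolding dadic_def by blast
  show ?thesis
  proof (cases "k \<ge> 0")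
    case True
    then have "real d powi k = real d ^ nat k"
      by (metis nat_0_le power_int_of_nat)
    then have "real d powi k * x = of_int (m1 * int d ^ nat k) / real d ^ k1"
      by (simp add: 1)
    then show ?thesis unfolding dadic_def by blast
  next
    case False
    then have "real d powi k = inverse (real d ^ nat (-k))"
      by (metis add.inverse_inverse nat_0_le neg_0_le_iff_le nle_le power_int_minus power_int_of_nat)
    then have "real d powi k * x = of_int m1 / real d ^ (k1 + nat (-k))"
      using assms(1) by (simp add: 1 power_add field_simps)
    then show ?thesis unfolding dadic_def by blast
  qed
qed

lemma dadic_div:
  assumes "d > 0" "x \<in> dadic d" shows "x / real d \<in> dadic d"
  using dadic_powi[OF assms, of "-1"] by (simp add: power_int_minus divide_inverse mult.commute)

section \<open>Partitions\<close>

lemma part_mono: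
  assumes "\<forall>i<n. (a::nat\<Rightarrow>real) i < a (Suc i)" "i < j" "j \<le> n" shows "a i < a j"
  using assms(2,3)
proof (induction j)
  case 0 then show ?case by simp
next
  case (Suc j)
  show ?case
  proof (cases "i = j")
    case True then show ?thesis using assms(1) Suc by simp
  next
    case False
    have ij: "i < j" using False Suc.prems by simp
    have "a i < a j" using Suc.IH ij Suc.prems by simp
    moreover have "a j < a (Suc j)" using assms(1) Suc.prems by simp
    ultimately show ?thesis by simp
  qed
qed

lemma part_le:
  assumes "\<forall>i<n. (a::nat\<Rightarrow>real) i < a (Suc i)" "i \<le> j" "j \<le> n" shows "a i \<le> a j"
proof (cases "i = j")
  case True then show ?thesis by simp
next
  case False then show ?thesis using part_mono[OF assms(1), of i j] assms(2,3) by simp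
qed

lemma part_exists:
  assumes "(a::nat\<Rightarrow>real) 0 \<le> x" "x < a n" shows "\<exists>i<n. a i \<le> x \<and> x < a (Suc i)"
  using assms(2)
proof (induction n)
  case 0 then show ?case using assms(1) by simp
next
  case (Suc n)
  show ?case
  proof (cases "x < a n")
    case True then show ?thesis using Suc by (meson less_SucI)
  next
    case False then show ?thesis using Suc by (intro exI[of _ n]) auto
  qed
qed

lemma part_unique:
  assumes "\<forall>i<n. (a::nat\<Rightarrow>real) i < a (Suc i)" "i < n" "j < n"
    "a i \<le> x" "x < a (Suc i)" "a j \<le> x" "x < a (Suc j)"
  shows "i = j"
proof (rule ccontr)
  assume "i \<noteq> j"
  then consider "i < j" | "j < i" by linarith
  then show False
  proof cases
    case 1 then have "a (Suc i) \<le> a j" using part_le[OF assms(1), of "Suc i" j] assms by simp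
    then show False using assms by simp
  next
    case 2 then have "a (Suc j) \<le> a i" using part_le[OF assms(1), of "Suc j" i] assms by simp
    then show False using assms by simp
  qed
qed

lemma part_inj:
  assumes "\<forall>i<n. (a::nat\<Rightarrow>real) i < a (Suc i)" "i \<le> n" "j \<le> n" "a i = a j" shows "i = j"
proof (rule ccontr)
  assume "i \<noteq> j"
  then consider "i < j" | "j < i" by linarith
  then show False
  proof cases
    case 1 then show False using part_mono[OF assms(1), of i j] assms by simp
  next
    case 2 then show False using part_mono[OF assms(1), of j i] assms by simp
  qed
qed



definition pwdata :: "nat \<Rightarrow> (real \<Rightarrow> real) \<Rightarrow> (nat \<Rightarrow> real) \<Rightarrow> nat \<Rightarrow> (nat \<Rightarrow> int) \<Rightarrow> (nat \<Rightarrow> real) \<Rightarrow> bool" where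
  "pwdata d f a n k b \<longleftrightarrow> a 0 = 0 \<and> a n = 1 \<and> (\<forall>i<n. a i < a (Suc i)) \<and> (\<forall>i\<le>n. a i \<in> dadic d) \<and>
        (\<forall>i<n. \<forall>x\<in>{a i..<a (Suc i)}. f x = (real d) powi (k i) * x + b i)"

lemma HT_V_iff: "(f::real\<Rightarrow>real) \<in> HT_V d \<longleftrightarrow> bij_betw f {0..<1} {0..<1} \<and> (\<forall>x. x \<notin> {0..<1} \<longrightarrow> f x = x) \<and>
   (\<exists>a n k b. pwdata d f a n k b)"
  unfolding HT_V_def pwdata_def by simp

lemma bij_ext:
  assumes "bij_betw f {0..<1::real} {0..<1}" "\<forall>x. x \<notin> {0..<1} \<longrightarrow> f x = x"
  shows "bij f"
proof -
  have "inj f"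
  proof (rule injI)
    fix x y assume "f x = f y"
    have i: "inj_on f {0..<1}" using assms(1) by (simp add: bij_betw_def)
    show "x = y"
    proof (cases "x \<in> {0..<1}"; cases "y \<in> {0..<1}")
      assume "x \<in> {0..<1}" "y \<in> {0..<1}" then show ?thesis using i \<open>f x = f y\<close> by (simp add: inj_on_def)
    next
      assume "x \<in> {0..<1}" "y \<notin> {0..<1}"
      then show ?thesis using \<open>f x = f y\<close> assms bij_betwE[OF assms(1)] by metis
    next
      assume "x \<notin> {0..<1}" "y \<in> {0..<1}"
      then show ?thesis using \<open>f x = f y\<close> assms bij_betwE[OF assms(1)] by metis
    next
      assume "x \<notin> {0..<1}" "y \<notin> {0..<1}"
      then show ?thesis using \<open>f x = f y\<close> assms by metis
    qed
  qed
  moreover have "surj f"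
  proof -
    have "y \<in> range f" for y
    proof (cases "y \<in> {0..<1}")
      case True
      then have "y \<in> f ` {0..<1}" using assms(1) by (simp add: bij_betw_def)
      then show ?thesis by blast
    next
      case False then have "f y = y" using assms(2) by blast
      then show ?thesis by (metis rangeI)
    qed
    then show ?thesis by blast
  qed
  ultimately show ?thesis by (simp add: bij_def)
qed

lemma inv_props:
  assumes "bij_betw f {0..<1::real} {0..<1}" "\<forall>x. x \<notin> {0..<1} \<longrightarrow> f x = x"
  defines "g \<equiv> inv_into UNIV f"
  shows "bij f" "\<And>x. g (f x) = x" "\<And>y. f (g y) = y" "bij_betw g {0..<1} {0..<1}"
    "\<forall>x. x \<notin> {0..<1} \<longrightarrow> g x = x" "bij g"
proof -
  show bf: "bij f" using bij_ext[OF assms(1,2)] .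
  show gf: "\<And>x. g (f x) = x" unfolding g_def using bf by (simp add: bij_is_inj)
  show fg: "\<And>y. f (g y) = y" unfolding g_def using bf by (simp add: bij_is_surj surj_f_inv_f)
  show go: "\<forall>x. x \<notin> {0..<1} \<longrightarrow> g x = x" using assms(2) gf by metis
  have "g ` {0..<1} = {0..<1}"
  proof
    show "g ` {0..<1} \<subseteq> {0..<1}"
    proof
      fix z assume "z \<in> g ` {0..<1}"
      then obtain y where y: "y \<in> {0..<1}" "z = g y" by blast
      show "z \<in> {0..<1}"
      proof (rule ccontr)
        assume "z \<notin> {0..<1}"
        then have "f z = z" using assms(2) by blast
        then show False using y fg by (metis \<open>z \<notin> {0..<1}\<close>)
      qed
    qed
    show "{0..<1} \<subseteq> g ` {0..<1}"
      using assms(1) gf by (metis bij_betw_imp_surj_on image_eqI subsetI)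
  qed
  moreover have "inj_on g {0..<1}" by (metis fg inj_on_inverseI)
  ultimately show "bij_betw g {0..<1} {0..<1}" by (simp add: bij_betw_def)
  show "bij g" using fg gf unfolding bij_def
    by (metis fg gf injI surjI)
qed

lemma enum_set:
  fixes B :: "real set"
  assumes "finite B" "B \<subseteq> {0..1}" "0 \<in> B" "1 \<in> B"
  shows "\<exists>c m. c 0 = 0 \<and> c m = 1 \<and> (\<forall>j<m. c j < c (Suc j)) \<and> c ` {..m} = B"
proof -
  define xs where "xs = sorted_list_of_set B"
  have sx: "sorted_wrt (<) xs" unfolding xs_def by simp
  have setx: "set xs = B" unfolding xs_def using assms(1) by simp
  have ne: "xs \<noteq> []" using setx assms(3) by auto
  define m where "m = length xs - 1"
  have lm: "length xs = Suc m" using ne unfolding m_def by (cases xs) auto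
  have mono: "\<forall>j<m. xs ! j < xs ! Suc j" using sx lm by (simp add: sorted_wrt_nth_less)
  have img: "(\<lambda>j. xs ! j) ` {..m} = B"
  proof -
    have "(\<lambda>j. xs ! j) ` {..m} = (\<lambda>j. xs ! j) ` {..<length xs}" using lm
      by (simp add: lessThan_Suc_atMost)
    also have "\<dots> = set xs" by (simp add: image_def set_conv_nth) blast
    finally show ?thesis using setx by simp
  qed
  have c0: "xs ! 0 = 0"
  proof -
    obtain j where j: "j \<le> m" "xs ! j = 0" using img assms(3) by (metis atMost_iff imageE)
    have "xs ! 0 \<in> B" using img by auto
    then have "xs ! 0 \<ge> 0" using assms(2) by auto
    moreover have "xs ! 0 \<le> xs ! j" using part_le[OF mono, of 0 j] j by simp
    ultimately show ?thesis using j by simp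
  qed
  have cm: "xs ! m = 1"
  proof -
    obtain j where j: "j \<le> m" "xs ! j = 1" using img assms(4) by (metis atMost_iff imageE)
    have "xs ! m \<in> B" using img by auto
    then have "xs ! m \<le> 1" using assms(2) by auto
    moreover have "xs ! j \<le> xs ! m" using part_le[OF mono, of j m] j by simp
    ultimately show ?thesis using j by simp
  qed
  show ?thesis using c0 cm mono img by blast
qed



lemma powi_pos: "d > 0 \<Longrightarrow> real d powi k > 0"
  by simp

lemma HT_V_inv:
  fixes f :: "real \<Rightarrow> real"
  assumes d: "d > 0" and fV: "f \<in> HT_V d"
  shows "inv_into UNIV f \<in> HT_V d"
proof -
  define g where "g = inv_into UNIV f"
  have bb: "bij_betw f {0..<1} {0..<1}" and fo: "\<forall>x. x \<notin> {0..<1} \<longrightarrow> f x = x"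
    using fV unfolding HT_V_iff by auto
  obtain a n k b where pw: "pwdata d f a n k b" using fV unfolding HT_V_iff by auto
  have a0: "a 0 = 0" and an: "a n = 1" and amono: "\<forall>i<n. a i < a (Suc i)"
    and adad: "\<forall>i\<le>n. a i \<in> dadic d"
    and fpc: "\<And>i x. i < n \<Longrightarrow> a i \<le> x \<Longrightarrow> x < a (Suc i) \<Longrightarrow> f x = real d powi k i * x + b i"
    using pw unfolding pwdata_def by auto
  define s where "s i = real d powi k i" for i
  have spos: "s i > 0" for i unfolding s_def using d by simp
  have fpc': "\<And>i x. i < n \<Longrightarrow> a i \<le> x \<Longrightarrow> x < a (Suc i) \<Longrightarrow> f x = s i * x + b i"
    using fpc s_def by simp
  have gf: "\<And>x. g (f x) = x" unfolding g_def by (rule inv_props(2)[OF bb fo])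
  have fg: "\<And>y. f (g y) = y" unfolding g_def by (rule inv_props(3)[OF bb fo])
  have gbb: "bij_betw g {0..<1} {0..<1}" unfolding g_def by (rule inv_props(4)[OF bb fo])
  have go: "\<forall>x. x \<notin> {0..<1} \<longrightarrow> g x = x" unfolding g_def by (rule inv_props(5)[OF bb fo])
  have f01: "x \<in> {0..<1} \<Longrightarrow> f x \<in> {0..<1}" for x using bb by (meson bij_betwE)
  have g01: "y \<in> {0..<1} \<Longrightarrow> g y \<in> {0..<1}" for y using gbb by (meson bij_betwE)
  have finj: "f x = f y \<Longrightarrow> x = y" for x y using gf by metis
  have arange: "i \<le> n \<Longrightarrow> 0 \<le> a i \<and> a i \<le> 1" for i
    using part_le[OF amono, of 0 i] part_le[OF amono, of i n] a0 an by simp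
  have arange': "i < n \<Longrightarrow> a i < 1" for i
    using part_mono[OF amono, of i n] an by simp
  have inpiece: "\<exists>i<n. a i \<le> x \<and> x < a (Suc i)" if "x \<in> {0..<1}" for x
    using part_exists[of a x n] that a0 an by simp
  define B where "B = (\<lambda>i. f (a i)) ` {..<n} \<union> {1}"
  have finB: "finite B" unfolding B_def by simp
  have Bsub: "B \<subseteq> {0..1}"
  proof
    fix y assume "y \<in> B"
    then consider "y = 1" | i where "i < n" "y = f (a i)" unfolding B_def by auto
    then show "y \<in> {0..1}"
    proof cases
      case 1 then show ?thesis by simp
    next
      case 2 then have "a i \<in> {0..<1}" using arange arange' by simp
      then have "f (a i) \<in> {0..<1}" by (rule f01)
      then show ?thesis using 2 by auto
    qed
  qed
  have B0: "0 \<in> B"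
  proof -
    have "g 0 \<in> {0..<1}" using g01 by simp
    then obtain i where i: "i < n" "a i \<le> g 0" "g 0 < a (Suc i)" using inpiece by blast
    have "f (a i) = s i * a i + b i" using fpc'[OF i(1)] i amono by simp
    moreover have "f (g 0) = s i * g 0 + b i" using fpc'[OF i] .
    ultimately have "f (a i) \<le> 0" using fg[of 0] i(2) spos[of i]
      by (metis mult_left_mono add_le_cancel_right less_imp_le)
    moreover have "f (a i) \<ge> 0" using f01[of "a i"] arange[of i] arange'[OF i(1)] i(1) by simp
    ultimately have "f (a i) = 0" by simp
    then show ?thesis unfolding B_def using i(1) by force
  qed
  have B1: "1 \<in> B" unfolding B_def by simp
  obtain c m where c0: "c 0 = 0" and cm: "c m = 1" and cmono: "\<forall>j<m. c j < c (Suc j)"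
    and cimg: "c ` {..m} = B"
    using enum_set[OF finB Bsub B0 B1] by blast
  have cB: "l \<le> m \<Longrightarrow> c l \<in> B" for l using cimg by auto
  have crange: "l \<le> m \<Longrightarrow> 0 \<le> c l \<and> c l \<le> 1" for l using cB[of l] Bsub
    by (meson atLeastAtMost_iff subsetD)
  have Bc: "y \<in> B \<Longrightarrow> \<exists>l\<le>m. c l = y" for y using cimg by auto
  have cbetween: "c (Suc j) \<le> c l" if "j < m" "l \<le> m" "c j < c l" for j l
  proof -
    have "\<not> l \<le> j" using part_le[OF cmono, of l j] that by auto
    then show ?thesis using part_le[OF cmono, of "Suc j" l] that by simp
  qed
  have sig_ex: "\<exists>i<n. f (a i) = c j" if "j < m" for j
  proof -
    have "c j < 1" using part_mono[OF cmono, of j m] that cm by simp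
    moreover have "c j \<in> B" using cB that by simp
    ultimately show ?thesis unfolding B_def by auto
  qed
  define \<sigma> where "\<sigma> j = (SOME i. i < n \<and> f (a i) = c j)" for j
  have sig: "\<sigma> j < n \<and> f (a (\<sigma> j)) = c j" if "j < m" for j
    unfolding \<sigma>_def using someI_ex[OF sig_ex[OF that]] .
  have bsig: "b (\<sigma> j) = c j - s (\<sigma> j) * a (\<sigma> j)" if "j < m" for j
    using sig[OF that] fpc'[of "\<sigma> j" "a (\<sigma> j)"] amono by force
  have key1: "a (\<sigma> j) \<le> g y \<and> g y < a (Suc (\<sigma> j))"
    if j: "j < m" and y: "c j \<le> y" "y < c (Suc j)" for j y
  proof -
    let ?p = "\<sigma> j"
    have p: "?p < n" "f (a ?p) = c j" using sig[OF j] by auto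
    have y01: "y \<in> {0..<1}" using crange[of j] crange[of "Suc j"] j y by auto
    define x where "x = g y"
    have x01: "x \<in> {0..<1}" using g01[OF y01] x_def by simp
    have fx: "f x = y" using fg x_def by simp
    obtain i where i: "i < n" "a i \<le> x" "x < a (Suc i)" using inpiece[OF x01] by blast
    have fai: "f (a i) = s i * a i + b i" using fpc'[OF i(1)] i amono by simp
    have fxi: "f x = s i * x + b i" using fpc'[OF i] .
    have le: "f (a i) \<le> y" using fai fxi fx i(2) spos[of i] by (simp add: mult_left_mono)
    have "f (a i) \<in> B" unfolding B_def using i(1) by auto
    then obtain l where l: "l \<le> m" "c l = f (a i)" using Bc by blast
    have "c l \<le> c j"
    proof (rule ccontr)
      assume "\<not> c l \<le> c j"
      then have "c (Suc j) \<le> c l" using cbetween[OF j l(1)] by simp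
      then show False using l le y by simp
    qed
    moreover have "\<not> c l < c j"
    proof
      assume lt: "c l < c j"
      define z where "z = a i + (c j - c l) / s i"
      have zgt: "a i < z" unfolding z_def using lt spos[of i] by simp
      have "c j - c l \<le> s i * (x - a i)" using l fai fxi fx y by (simp add: algebra_simps)
      then have "(c j - c l) / s i \<le> x - a i" using spos[of i] by (simp add: divide_le_eq mult.commute)
      then have zle: "z \<le> x" unfolding z_def by simp
      have "f z = s i * z + b i" using fpc'[OF i(1)] zgt zle i by simp
      also have "\<dots> = c j" unfolding z_def using l fai spos[of i] by (simp add: field_simps)
      finally have "f z = f (a ?p)" using p by simp
      then have zeq: "z = a ?p" using finj by blast
      have "?p = i"
        using part_unique[OF amono p(1) i(1), of z] zeq zgt zle i amono p(1) by simp
      then show False using zeq zgt by simp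
    qed
    ultimately have "c l = c j" by simp
    then have "a i = a ?p" using l p finj by simp
    then have "i = ?p" using part_inj[OF amono, of i ?p] i(1) p(1) by simp
    then show ?thesis using i x_def by simp
  qed
  have key2: "c (Suc j) = c j + s (\<sigma> j) * (a (Suc (\<sigma> j)) - a (\<sigma> j))" if j: "j < m" for j
  proof -
    let ?p = "\<sigma> j"
    have p: "?p < n" "f (a ?p) = c j" using sig[OF j] by auto
    define e where "e = c j + s ?p * (a (Suc ?p) - a ?p)"
    have bp: "b ?p = c j - s ?p * a ?p" using bsig[OF j] .
    have ecj: "c j < e" unfolding e_def using spos[of ?p] amono p(1) by simp
    have "c (Suc j) \<le> e"
    proof (rule ccontr)
      assume "\<not> c (Suc j) \<le> e"
      then have "e < c (Suc j)" by simp
      then have k: "a ?p \<le> g e \<and> g e < a (Suc ?p)" using key1[OF j] ecj by simp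
      then have "f (g e) = s ?p * g e + b ?p" using fpc'[OF p(1)] by simp
      then have "e = s ?p * g e + b ?p" using fg by simp
      also have "\<dots> < s ?p * a (Suc ?p) + b ?p" using k spos[of ?p] by simp
      also have "\<dots> = e" unfolding e_def bp by (simp add: algebra_simps)
      finally show False by simp
    qed
    moreover have "e \<le> c (Suc j)"
    proof (rule ccontr)
      assume "\<not> e \<le> c (Suc j)"
      then have lt: "c (Suc j) < e" by simp
      define z where "z = a ?p + (c (Suc j) - c j) / s ?p"
      have cjs: "c j < c (Suc j)" using cmono j by simp
      have zgt: "a ?p < z" unfolding z_def using cjs spos[of ?p] by simp
      have "c (Suc j) - c j < s ?p * (a (Suc ?p) - a ?p)" using lt unfolding e_def by simp
      then have "(c (Suc j) - c j) / s ?p < a (Suc ?p) - a ?p" using spos[of ?p]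
        by (simp add: divide_less_eq mult.commute)
      then have zlt: "z < a (Suc ?p)" unfolding z_def by simp
      have fz: "f z = c (Suc j)"
        using fpc'[OF p(1), of z] zgt zlt bp spos[of ?p] unfolding z_def by (simp add: field_simps)
      have z01: "z \<in> {0..<1}" using zgt zlt arange[of ?p] arange[of "Suc ?p"] p(1) by simp
      have "c (Suc j) < 1" using f01[OF z01] fz by simp
      moreover have "c (Suc j) \<in> B" using cB j by simp
      ultimately obtain i where i: "i < n" "f (a i) = c (Suc j)" unfolding B_def by auto
      then have "a i = z" using fz finj by simp
      then show False
      proof (cases "i \<le> ?p")
        case True then have "a i \<le> a ?p" using part_le[OF amono] p(1) by simp
        then show False using \<open>a i = z\<close> zgt by simp
      next
        case False then have "a (Suc ?p) \<le> a i" using part_le[OF amono] i(1) by simp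
        then show False using \<open>a i = z\<close> zlt by simp
      qed
    qed
    ultimately show ?thesis unfolding e_def by simp
  qed
  have cdad: "j \<le> m \<Longrightarrow> c j \<in> dadic d" for j
  proof (induction j)
    case 0 then show ?case using c0 dadic_0 by simp
  next
    case (Suc j)
    then have j: "j < m" by simp
    have "\<sigma> j < n" using sig[OF j] by simp
    then have "a (Suc (\<sigma> j)) - a (\<sigma> j) \<in> dadic d" using adad d by (simp add: dadic_diff)
    then have "s (\<sigma> j) * (a (Suc (\<sigma> j)) - a (\<sigma> j)) \<in> dadic d" unfolding s_def using dadic_powi d by simp
    then show ?case using key2[OF j] Suc dadic_add d by simp
  qed
  have gpc: "g y = real d powi (- k (\<sigma> j)) * y + (- b (\<sigma> j) / s (\<sigma> j))"
    if j: "j < m" and y: "c j \<le> y" "y < c (Suc j)" for j y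
  proof -
    have k: "a (\<sigma> j) \<le> g y \<and> g y < a (Suc (\<sigma> j))" using key1[OF j y] .
    have "y = s (\<sigma> j) * g y + b (\<sigma> j)" using fpc'[of "\<sigma> j" "g y"] k sig[OF j] fg by simp
    then have "g y = (y - b (\<sigma> j)) / s (\<sigma> j)" using spos[of "\<sigma> j"] by (simp add: field_simps)
    moreover have "real d powi (- k (\<sigma> j)) = inverse (s (\<sigma> j))" unfolding s_def by (simp add: power_int_minus)
    ultimately show ?thesis by (simp add: divide_inverse algebra_simps)
  qed
  have "pwdata d g c m (\<lambda>j. - k (\<sigma> j)) (\<lambda>j. - b (\<sigma> j) / s (\<sigma> j))"
    unfolding pwdata_def using c0 cm cmono cdad gpc by auto
  then show ?thesis unfolding g_def[symmetric] HT_V_iff using gbb go by blast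
qed



definition pc :: "real \<Rightarrow> complex" where "pc t = cis (2 * pi * t)"

lemma pc_frac: "pc (frac x) = pc x"
proof -
  have e: "2 * pi * x = 2 * pi * frac x + 2 * pi * of_int \<lfloor>x\<rfloor>" by (simp add: frac_def algebra_simps)
  have "pc x = cis (2 * pi * frac x) * cis (2 * pi * of_int \<lfloor>x\<rfloor>)"
    unfolding pc_def by (subst e) (simp only: cis_mult)
  moreover have "cis (2 * pi * of_int \<lfloor>x\<rfloor>) = 1" by (rule cis_multiple_2pi) simp
  ultimately show ?thesis unfolding pc_def by simp
qed

lemma pc_inj:
  assumes "a \<in> {0..<1}" "b \<in> {0..<1}" "pc a = pc b" shows "a = b"
proof -
  have "sin (2*pi*a) = sin (2*pi*b) \<and> cos (2*pi*a) = cos (2*pi*b)"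
    using assms(3) unfolding pc_def by (simp add: complex_eq_iff)
  then obtain n :: int where n: "2*pi*a = 2*pi*b + 2*pi*n" using sin_cos_eq_iff by blast
  then have "2*pi*a = 2*pi*(b + n)" by (simp add: algebra_simps)
  then have "a = b + n" by simp
  then have h1: "real_of_int n < 1" and h2: "real_of_int n > -1" using assms(1,2) by auto
  have "n < 1" using h1 by simp
  moreover have "n > -1" using h2 by simp
  ultimately have "n = 0" by simp
  then show ?thesis using \<open>a = b + n\<close> by simp
qed

lemma pc_sphere: "pc t \<in> sphere 0 1" unfolding pc_def by simp

lemma pc_surj:
  assumes "z \<in> sphere (0::complex) 1" shows "\<exists>t\<in>{0..<1}. pc t = z"
proof -
  have nz: "norm z = 1" using assms by simp
  then have z0: "z \<noteq> 0" by auto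
  define t where "t = frac (Arg z / (2 * pi))"
  have "pc t = pc (Arg z / (2 * pi))" unfolding t_def by (rule pc_frac)
  also have "\<dots> = cis (Arg z)" unfolding pc_def by simp
  also have "\<dots> = sgn z" using z0 by (rule cis_Arg)
  also have "\<dots> = z" using nz by (simp add: sgn_div_norm)
  finally have "pc t = z" .
  moreover have "t \<in> {0..<1}" unfolding t_def by (simp add: frac_lt_1)
  ultimately show ?thesis by blast
qed

lemma pc_cont: "continuous_on A pc" unfolding pc_def by (intro continuous_intros)

lemma pc_image01: "pc ` {0..1} = sphere 0 1"
proof
  show "pc ` {0..1} \<subseteq> sphere 0 1" using pc_sphere by auto
  show "sphere 0 1 \<subseteq> pc ` {0..1}"
  proof
    fix z :: complex assume "z \<in> sphere 0 1"
    then obtain t where "t \<in> {0..<1}" "pc t = z" using pc_surj by blast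
    then show "z \<in> pc ` {0..1}" by force
  qed
qed

lemma pc_quotient: "quotient_map (top_of_set {0..1}) (top_of_set (sphere 0 1)) pc"
proof (rule continuous_imp_quotient_map)
  show "continuous_map (top_of_set {0..1}) (top_of_set (sphere 0 1)) pc"
    using pc_cont pc_sphere by (simp add: Pi_iff)
  show "compact_space (top_of_set {0..1::real})"
    by (simp add: compact_space_subtopology)
  show "Hausdorff_space (top_of_set (sphere (0::complex) 1))"
    by (simp add: Hausdorff_space_subtopology)
  show "pc ` topspace (top_of_set {0..1}) = topspace (top_of_set (sphere 0 1))"
    using pc_image01 by simp
qed

lemma circle_inv:
  fixes f g :: "real \<Rightarrow> real"
  assumes bb: "bij_betw f {0..<1} {0..<1}"
    and fc: "continuous_on UNIV (\<lambda>x. cis (2 * pi * f (frac x)))"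
    and gf: "\<And>x. x \<in> {0..<1} \<Longrightarrow> g (f x) = x"
    and g01: "\<And>y. y \<in> {0..<1} \<Longrightarrow> g y \<in> {0..<1}"
  shows "continuous_on UNIV (\<lambda>x. cis (2 * pi * g (frac x)))"
proof -
  define S where "S = sphere (0::complex) 1"
  define \<theta> where "\<theta> = inv_into {0..<1} pc"
  have injpc: "inj_on pc {0..<1}" using pc_inj by (meson inj_onI)
  have thpc: "t \<in> {0..<1} \<Longrightarrow> \<theta> (pc t) = t" for t unfolding \<theta>_def using injpc by simp
  have pcim: "z \<in> S \<Longrightarrow> z \<in> pc ` {0..<1}" for z unfolding S_def using pc_surj by force
  have pcth: "z \<in> S \<Longrightarrow> pc (\<theta> z) = z" for z unfolding \<theta>_def
    using pcim by (rule f_inv_into_f)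
  have th01: "z \<in> S \<Longrightarrow> \<theta> z \<in> {0..<1}" for z unfolding \<theta>_def
    using pcim by (rule inv_into_into)
  have thx: "\<theta> (pc x) = frac x" for x
    using thpc[of "frac x"] pc_frac[of x] frac_lt_1[of x] by simp
  have f01: "x \<in> {0..<1} \<Longrightarrow> f x \<in> {0..<1}" for x using bb by (meson bij_betwE)
  have fsurj: "y \<in> {0..<1} \<Longrightarrow> \<exists>x\<in>{0..<1}. f x = y" for y using bb
    by (metis bij_betw_imp_surj_on imageE)
  define fh where "fh z = pc (f (\<theta> z))" for z
  define gh where "gh z = pc (g (\<theta> z))" for z
  have "continuous_on {0..1} (fh \<circ> pc)"
  proof -
    have "continuous_on {0..1} (\<lambda>x. cis (2 * pi * f (frac x)))"
      using fc continuous_on_subset by blast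
    moreover have "(fh \<circ> pc) x = cis (2 * pi * f (frac x))" if "x \<in> {0..1}" for x
    proof (cases "x = 1")
      case True
      have "pc 1 = pc 0" using pc_frac[of 1] by simp
      then show ?thesis using True thpc[of 0] unfolding fh_def by (simp add: pc_def)
    next
      case False then have "x \<in> {0..<1}" using that by simp
      then show ?thesis unfolding fh_def using thpc by (simp add: pc_def)
    qed
    ultimately show ?thesis using continuous_on_cong by (smt (verit))
  qed
  then have "continuous_map (top_of_set {0..1}) euclidean (fh \<circ> pc)" by simp
  then have "continuous_map (top_of_set S) euclidean fh"
    using continuous_compose_quotient_map[OF pc_quotient] unfolding S_def by blast
  then have cfh: "continuous_on S fh" by simp
  have "continuous_on (fh ` S) gh"
  proof (rule continuous_on_inv[OF cfh])
    show "compact S" unfolding S_def by simp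
    show "\<forall>x\<in>S. gh (fh x) = x"
    proof
      fix z assume z: "z \<in> S"
      have "gh (fh z) = pc (g (\<theta> (pc (f (\<theta> z)))))" unfolding gh_def fh_def by simp
      also have "\<dots> = pc (g (f (\<theta> z)))" using thpc f01 th01 z by simp
      also have "\<dots> = pc (\<theta> z)" using gf th01 z by simp
      also have "\<dots> = z" using pcth z by simp
      finally show "gh (fh z) = z" .
    qed
  qed
  moreover have "fh ` S = S"
  proof
    show "fh ` S \<subseteq> S" unfolding fh_def S_def using pc_sphere by auto
    show "S \<subseteq> fh ` S"
    proof
      fix w assume w: "w \<in> S"
      obtain t where t: "t \<in> {0..<1}" "pc t = w" using pc_surj w unfolding S_def by blast
      obtain x where x: "x \<in> {0..<1}" "f x = t" using fsurj t(1) by blast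
      have "fh (pc x) = w" unfolding fh_def using thpc x t by simp
      moreover have "pc x \<in> S" unfolding S_def by (rule pc_sphere)
      ultimately show "w \<in> fh ` S" by force
    qed
  qed
  ultimately have cgh: "continuous_on S gh" by simp
  have "continuous_on UNIV (gh \<circ> pc)"
    by (rule continuous_on_compose[OF pc_cont]) (metis cgh continuous_on_subset image_subsetI pc_sphere S_def)
  moreover have "(gh \<circ> pc) = (\<lambda>x. cis (2 * pi * g (frac x)))"
  proof
    fix x show "(gh \<circ> pc) x = cis (2 * pi * g (frac x))"
      unfolding gh_def comp_def thx by (simp add: pc_def)
  qed
  ultimately show ?thesis by simp
qed

lemma HT_T_inv:
  fixes f :: "real \<Rightarrow> real"
  assumes d: "d > 0" and fT: "f \<in> HT_T d"
  shows "inv_into UNIV f \<in> HT_T d"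
proof -
  have fV: "f \<in> HT_V d" and fc: "continuous_on UNIV (\<lambda>x. cis (2 * pi * f (frac x)))"
    using fT unfolding HT_T_def by auto
  have bb: "bij_betw f {0..<1} {0..<1}" and fo: "\<forall>x. x \<notin> {0..<1} \<longrightarrow> f x = x"
    using fV unfolding HT_V_iff by auto
  have gV: "inv_into UNIV f \<in> HT_V d" by (rule HT_V_inv[OF d fV])
  have "continuous_on UNIV (\<lambda>x. cis (2 * pi * inv_into UNIV f (frac x)))"
  proof (rule circle_inv[OF bb fc])
    show "\<And>x. inv_into UNIV f (f x) = x" by (rule inv_props(2)[OF bb fo])
    show "\<And>y. y \<in> {0..<1} \<Longrightarrow> inv_into UNIV f y \<in> {0..<1}"
      using inv_props(4)[OF bb fo] by (meson bij_betwE)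
  qed
  then show ?thesis using gV unfolding HT_T_def by simp
qed



definition phi :: "real \<Rightarrow> real \<Rightarrow> real \<Rightarrow> real \<Rightarrow> real" where
  "phi D u L x = u + min (x - u) 0 + min (max (x - u) 0) L / D + D * min (max (x - u - L) 0) (L / D)
     + max (x - u - L - L / D) 0"

definition psi :: "real \<Rightarrow> real \<Rightarrow> real \<Rightarrow> real \<Rightarrow> real" where
  "psi D u L y = u + min (y - u) 0 + D * min (max (y - u) 0) (L / D) + min (max (y - u - L / D) 0) L / D
     + max (y - u - L / D - L) 0"

context
  fixes D u L :: real
  assumes D: "1 < D" and L: "0 < L"
begin

lemma LD: "0 < L / D" using D L by simp

lemma phi_eq: "phi D u L x = u + min (x - u) 0 + min (max (x - u) 0) L / D + D * min (max (x - u - L) 0) (L / D)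
     + max (x - u - L - L / D) 0" by (simp add: phi_def)
lemma psi_eq: "psi D u L y = u + min (y - u) 0 + D * min (max (y - u) 0) (L / D) + min (max (y - u - L / D) 0) L / D
     + max (y - u - L / D - L) 0" by (simp add: psi_def)

lemma phi1: "x \<le> u \<Longrightarrow> phi D u L x = x"
proof -
  assume x: "x \<le> u"
  have "min (x - u) 0 = x - u" "min (max (x - u) 0) L = 0" "min (max (x - u - L) 0) (L / D) = 0"
    "max (x - u - L - L / D) 0 = 0" using x L LD by (auto simp: min_def max_def)
  then show ?thesis unfolding phi_eq by simp
qed
lemma phi2: "u + L + L / D \<le> x \<Longrightarrow> phi D u L x = x"
proof -
  assume x: "u + L + L / D \<le> x"
  have "min (x - u) 0 = 0" "min (max (x - u) 0) L = L" "min (max (x - u - L) 0) (L / D) = L / D"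
    "max (x - u - L - L / D) 0 = x - u - L - L / D" using x L LD by (auto simp: min_def max_def)
  then show ?thesis unfolding phi_eq using D by simp
qed
lemma phi3: "u \<le> x \<Longrightarrow> x \<le> u + L \<Longrightarrow> phi D u L x = u + (x - u) / D"
proof -
  assume x: "u \<le> x" "x \<le> u + L"
  have "min (x - u) 0 = 0" "min (max (x - u) 0) L = x - u" "min (max (x - u - L) 0) (L / D) = 0"
    "max (x - u - L - L / D) 0 = 0" using x L LD by (auto simp: min_def max_def)
  then show ?thesis unfolding phi_eq by simp
qed
lemma phi4: "u + L \<le> x \<Longrightarrow> x \<le> u + L + L / D \<Longrightarrow> phi D u L x = u + L / D + D * (x - u - L)"
proof -
  assume x: "u + L \<le> x" "x \<le> u + L + L / D"
  have "min (x - u) 0 = 0" "min (max (x - u) 0) L = L" "min (max (x - u - L) 0) (L / D) = x - u - L"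
    "max (x - u - L - L / D) 0 = 0" using x L LD by (auto simp: min_def max_def)
  then show ?thesis unfolding phi_eq by simp
qed

lemma psi1: "y \<le> u \<Longrightarrow> psi D u L y = y"
proof -
  assume y: "y \<le> u"
  have "min (y - u) 0 = y - u" "min (max (y - u) 0) (L / D) = 0" "min (max (y - u - L / D) 0) L = 0"
    "max (y - u - L / D - L) 0 = 0" using y L LD by (auto simp: min_def max_def)
  then show ?thesis unfolding psi_eq by simp
qed
lemma psi2: "u + L + L / D \<le> y \<Longrightarrow> psi D u L y = y"
proof -
  assume y: "u + L + L / D \<le> y"
  have "min (y - u) 0 = 0" "min (max (y - u) 0) (L / D) = L / D" "min (max (y - u - L / D) 0) L = L"
    "max (y - u - L / D - L) 0 = y - u - L / D - L" using y L LD by (auto simp: min_def max_def)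
  then show ?thesis unfolding psi_eq using D by simp
qed
lemma psi3: "u \<le> y \<Longrightarrow> y \<le> u + L / D \<Longrightarrow> psi D u L y = u + D * (y - u)"
proof -
  assume y: "u \<le> y" "y \<le> u + L / D"
  have "min (y - u) 0 = 0" "min (max (y - u) 0) (L / D) = y - u" "min (max (y - u - L / D) 0) L = 0"
    "max (y - u - L / D - L) 0 = 0" using y L LD by (auto simp: min_def max_def)
  then show ?thesis unfolding psi_eq by simp
qed
lemma psi4: "u + L / D \<le> y \<Longrightarrow> y \<le> u + L + L / D \<Longrightarrow> psi D u L y = u + L + (y - u - L / D) / D"
proof -
  assume y: "u + L / D \<le> y" "y \<le> u + L + L / D"
  have "min (y - u) 0 = 0" "min (max (y - u) 0) (L / D) = L / D" "min (max (y - u - L / D) 0) L = y - u - L / D"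
    "max (y - u - L / D - L) 0 = 0" using y L LD by (auto simp: min_def max_def)
  then show ?thesis unfolding psi_eq using D by simp
qed

lemma phi_psi: "phi D u L (psi D u L y) = y"
proof -
  consider "y \<le> u" | "u + L + L / D \<le> y" | "u \<le> y" "y \<le> u + L / D" | "u + L / D \<le> y" "y \<le> u + L + L / D"
    by linarith
  then show ?thesis
  proof cases
    case 1 then show ?thesis by (simp add: psi1 phi1)
  next
    case 2 then show ?thesis by (simp add: psi2 phi2)
  next
    case 3
    have a: "psi D u L y = u + D * (y - u)" using psi3 3 by simp
    have "D * (y - u) \<le> L" using 3 D by (simp add: field_simps)
    then have "phi D u L (u + D * (y - u)) = u + ((u + D * (y - u)) - u) / D"
      using 3 D by (intro phi3) (auto simp: mult_nonneg_nonneg)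
    then show ?thesis using a D by simp
  next
    case 4
    have a: "psi D u L y = u + L + (y - u - L / D) / D" using psi4 4 by simp
    have "(y - u - L / D) / D \<le> L / D" using 4 D by (simp add: divide_right_mono)
    then have "phi D u L (u + L + (y - u - L / D) / D) = u + L / D + D * ((u + L + (y - u - L / D) / D) - u - L)"
      using 4 D by (intro phi4) auto
    then show ?thesis using a D by simp
  qed
qed

lemma psi_phi: "psi D u L (phi D u L x) = x"
proof -
  consider "x \<le> u" | "u + L + L / D \<le> x" | "u \<le> x" "x \<le> u + L" | "u + L \<le> x" "x \<le> u + L + L / D"
    by linarith
  then show ?thesis
  proof cases
    case 1 then show ?thesis by (simp add: psi1 phi1)
  next
    case 2 then show ?thesis by (simp add: psi2 phi2)
  next
    case 3
    have a: "phi D u L x = u + (x - u) / D" using phi3 3 by simp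
    have "(x - u) / D \<le> L / D" using 3 D by (simp add: divide_right_mono)
    then have "psi D u L (u + (x - u) / D) = u + D * ((u + (x - u) / D) - u)"
      using 3 D by (intro psi3) auto
    then show ?thesis using a D by simp
  next
    case 4
    have a: "phi D u L x = u + L / D + D * (x - u - L)" using phi4 4 by simp
    have "D * (x - u - L) \<le> L" using 4 D by (simp add: field_simps)
    then have "psi D u L (u + L / D + D * (x - u - L)) = u + L + ((u + L / D + D * (x - u - L)) - u - L / D) / D"
      using 4 D by (intro psi4) (auto simp: mult_nonneg_nonneg)
    then show ?thesis using a D by simp
  qed
qed

lemma phi_range: "u \<le> x \<Longrightarrow> x \<le> u + L + L / D \<Longrightarrow> u \<le> phi D u L x \<and> phi D u L x \<le> u + L + L / D"
proof -
  assume x: "u \<le> x" "x \<le> u + L + L / D"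
  consider "x \<le> u + L" | "u + L \<le> x" by linarith
  then show ?thesis
  proof cases
    case 1
    have "(x - u) / D \<le> L / D" using 1 D by (simp add: divide_right_mono)
    then show ?thesis using phi3[OF x(1) 1] x D L by simp
  next
    case 2
    have "D * (x - u - L) \<le> L" using 2 x D by (simp add: field_simps)
    moreover have "0 \<le> D * (x - u - L)" using 2 D by simp
    ultimately show ?thesis using phi4[OF 2 x(2)] x D L LD by simp
  qed
qed

lemma psi_range: "u \<le> y \<Longrightarrow> y \<le> u + L + L / D \<Longrightarrow> u \<le> psi D u L y \<and> psi D u L y \<le> u + L + L / D"
proof -
  assume y: "u \<le> y" "y \<le> u + L + L / D"
  consider "y \<le> u + L / D" | "u + L / D \<le> y" by linarith
  then show ?thesis
  proof cases
    case 1
    have "D * (y - u) \<le> L" using 1 D by (simp add: field_simps)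
    moreover have "0 \<le> D * (y - u)" using y D by simp
    ultimately have "u + D * (y - u) \<le> u + L + L / D" "u \<le> u + D * (y - u)" using LD by linarith+
    then show ?thesis using psi3[OF y(1) 1] by simp
  next
    case 2
    have "(y - u - L / D) / D \<le> L / D" using 2 y D by (simp add: divide_right_mono)
    moreover have "0 \<le> (y - u - L / D) / D" using 2 D by simp
    ultimately show ?thesis using psi4[OF 2 y(2)] y D L LD by simp
  qed
qed

lemma phi_cont: "continuous_on UNIV (phi D u L)"
  unfolding phi_def using D by (intro continuous_intros) auto

end

lemma circle_cont_support:
  fixes \<phi> :: "real \<Rightarrow> real"
  assumes cont: "continuous_on UNIV \<phi>" and c: "0 < c" and e: "e < 1" and ce: "c \<le> e"
    and out: "\<And>x. x \<notin> {c..e} \<Longrightarrow> \<phi> x = x"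
  shows "continuous_on UNIV (\<lambda>x. cis (2 * pi * \<phi> (frac x)))"
proof -
  define h where "h y = cis (2 * pi * \<phi> y)" for y
  have ch: "continuous_on UNIV h" unfolding h_def using cont by (intro continuous_intros) auto
  have "isCont (\<lambda>x. h (frac x)) x0" for x0
  proof (cases "x0 \<in> \<int>")
    case False
    have "isCont h (frac x0)" using ch by (simp add: continuous_on_eq_continuous_at)
    then have "isCont (h \<circ> frac) x0"
      using continuous_at_compose[OF continuous_frac[OF False]] by blast
    then show ?thesis by (simp add: o_def)
  next
    case True
    then obtain m :: int where m: "x0 = of_int m" by (metis Ints_cases)
    define r where "r = min c (1 - e)"
    have r: "0 < r" unfolding r_def using c e by simp
    have ev: "eventually (\<lambda>x. h (frac x) = pc x) (nhds x0)"
    proof -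
      have "eventually (\<lambda>x. x \<in> ball x0 r) (nhds x0)" using r by (intro eventually_nhds_in_open) auto
      moreover have "h (frac x) = pc x" if "x \<in> ball x0 r" for x
      proof -
        have dx: "\<bar>x - x0\<bar> < r" using that by (simp add: dist_real_def abs_minus_commute)
        have "frac x \<notin> {c..e}"
        proof (cases "x0 \<le> x")
          case True
          have "frac x = x - x0"
            unfolding frac_unique_iff using True dx m r_def e ce by auto
          then show ?thesis using dx True r_def by auto
        next
          case False
          have "frac x = x - x0 + 1"
            unfolding frac_unique_iff using False dx m r_def c e ce
            by (auto simp: algebra_simps)
          then show ?thesis using dx False r_def by auto
        qed
        then have "\<phi> (frac x) = frac x" using out by blast
        then show ?thesis unfolding h_def using pc_frac[of x] by (simp add: pc_def)
      qed
      ultimately show ?thesis by (rule eventually_mono)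
    qed
    have "isCont pc x0" using pc_cont[of UNIV] by (simp add: continuous_on_eq_continuous_at)
    then show ?thesis using isCont_cong[OF ev] by simp
  qed
  then show ?thesis unfolding h_def by (simp add: continuous_on_eq_continuous_at)
qed



lemma phi_HT_T:
  assumes d: "d \<ge> 2" and ud: "u \<in> dadic d" and Ld: "L \<in> dadic d" and u0: "0 < u" and L0: "0 < L"
    and w1: "u + L + L / real d < 1"
  shows "phi (real d) u L \<in> HT_T d"
proof -
  define D where "D = real d"
  have D: "1 < D" unfolding D_def using d by simp
  have d0: "d > 0" using d by simp
  have LD: "0 < L / D" using D L0 by simp
  define w where "w = u + L + L / D"
  have w1': "w < 1" using w1 unfolding w_def D_def .
  let ?f = "phi D u L"
  let ?g = "psi D u L"
  have into: "?f x \<in> {0..<1}" if "x \<in> {0..<1}" for x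
  proof (cases "x \<le> u \<or> w \<le> x")
    case True then show ?thesis using phi1[OF D L0] phi2[OF D L0] that unfolding w_def by auto
  next
    case False then show ?thesis using phi_range[OF D L0, of u x] u0 w1' unfolding w_def by auto
  qed
  have into2: "?g x \<in> {0..<1}" if "x \<in> {0..<1}" for x
  proof (cases "x \<le> u \<or> w \<le> x")
    case True then show ?thesis using psi1[OF D L0] psi2[OF D L0] that unfolding w_def by auto
  next
    case False then show ?thesis using psi_range[OF D L0, of u x] u0 w1' unfolding w_def by auto
  qed
  have bb: "bij_betw ?f {0..<1} {0..<1}"
    by (rule bij_betw_byWitness[where f' = ?g]) (use psi_phi[OF D L0] phi_psi[OF D L0] into into2 in auto)
  have outs: "\<forall>x. x \<notin> {0..<1} \<longrightarrow> ?f x = x"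
  proof (intro allI impI)
    fix x :: real assume "x \<notin> {0..<1}"
    then consider "x < 0" | "1 \<le> x" by auto
    then show "?f x = x"
    proof cases
      case 1 then show ?thesis using phi1[OF D L0] u0 by simp
    next
      case 2 then show ?thesis using phi2[OF D L0] w1' unfolding w_def by simp
    qed
  qed
  define a where "a i = [0, u, u + L, w, 1] ! i" for i
  define k where "k i = [0, -1, 1, 0::int] ! i" for i
  define b where "b i = [0, u - u / D, u + L / D - D * (u + L), 0] ! i" for i
  have i4: "i < 4 \<Longrightarrow> i = 0 \<or> i = 1 \<or> i = 2 \<or> i = 3" for i :: nat by auto
  have i5: "i \<le> 4 \<Longrightarrow> i = 0 \<or> i = 1 \<or> i = 2 \<or> i = 3 \<or> i = 4" for i :: nat by auto
  have "pwdata d ?f a 4 k b"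
    unfolding pwdata_def
  proof (intro conjI allI impI ballI)
    show "a 0 = 0" "a 4 = 1" unfolding a_def by simp_all
    show "a i < a (Suc i)" if "i < 4" for i
      using i4[OF that] u0 L0 LD w1' unfolding a_def w_def by auto
    have "w \<in> dadic d" unfolding w_def D_def using dadic_add[OF d0] dadic_div[OF d0] ud Ld by simp
    moreover have "u + L \<in> dadic d" using dadic_add[OF d0] ud Ld by simp
    ultimately show "a i \<in> dadic d" if "i \<le> 4" for i
      using i5[OF that] ud dadic_0 dadic_1 unfolding a_def by auto
    fix i x assume i: "i < 4" and x: "x \<in> {a i..<a (Suc i)}"
    show "?f x = real d powi k i * x + b i"
      using i4[OF i]
    proof (elim disjE)
      assume "i = 0"
      then have "x \<le> u" using x unfolding a_def by simp
      then show ?thesis using \<open>i = 0\<close> phi1[OF D L0, of x u] unfolding k_def b_def by simp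
    next
      assume "i = 1"
      then have "u \<le> x" "x \<le> u + L" using x unfolding a_def by auto
      then have "?f x = u + (x - u) / D" by (rule phi3[OF D L0])
      then show ?thesis using \<open>i = 1\<close> D unfolding k_def b_def D_def
        by (simp add: power_int_minus field_simps)
    next
      assume "i = 2"
      then have "u + L \<le> x" "x \<le> u + L + L / D" using x unfolding a_def w_def by auto
      then have "?f x = u + L / D + D * (x - u - L)" by (rule phi4[OF D L0])
      then show ?thesis using \<open>i = 2\<close> D unfolding k_def b_def D_def
        by (simp add: algebra_simps)
    next
      assume "i = 3"
      then have "w \<le> x" using x unfolding a_def by auto
      then show ?thesis using \<open>i = 3\<close> phi2[OF D L0, of u x] unfolding k_def b_def w_def by simp
    qed
  qed
  then have fV: "?f \<in> HT_V d" unfolding HT_V_iff D_def using bb outs D_def by blast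
  have "continuous_on UNIV (\<lambda>x. cis (2 * pi * ?f (frac x)))"
  proof (rule circle_cont_support[OF phi_cont[OF D L0] u0 w1'])
    show "u \<le> w" unfolding w_def using L0 LD by simp
    fix x assume "x \<notin> {u..w}"
    then consider "x \<le> u" | "w \<le> x" by auto
    then show "?f x = x" using phi1[OF D L0] phi2[OF D L0] unfolding w_def by cases auto
  qed
  then show ?thesis using fV unfolding HT_T_def D_def by simp
qed

lemma family:
  fixes \<alpha> \<beta> y p :: real
  assumes d: "d \<ge> 2" and a0: "0 \<le> \<alpha>" and ay: "\<alpha> < y" and yb: "y < \<beta>" and b1: "\<beta> \<le> 1" and py: "p \<noteq> y"
  shows "\<exists>F :: nat \<Rightarrow> real \<Rightarrow> real. (\<forall>n. F n \<in> HT_T d \<and> (\<forall>z. z \<notin> {\<alpha><..<\<beta>} \<longrightarrow> F n z = z) \<and> F n p = p) \<and> inj (\<lambda>n. F n y)"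
proof -
  define D where "D = real d"
  have D: "1 < D" unfolding D_def using d by simp
  have d0: "d > 0" using d by simp
  define \<epsilon> where "\<epsilon> = min \<bar>p - y\<bar> (min (y - \<alpha>) (\<beta> - y)) / 4"
  have \<epsilon>: "0 < \<epsilon>" unfolding \<epsilon>_def using py ay yb by simp
  obtain N where N: "(1 / D) ^ N < \<epsilon>" using real_arch_pow_inv[OF \<epsilon>, of "1 / D"] D by auto
  define K where "K = 1 / D ^ N"
  have K: "0 < K" "K < \<epsilon>" unfolding K_def using N D by (auto simp: power_one_over)
  have DN: "0 < D ^ N" using D by simp
  define c where "c = of_int \<lfloor>y * D ^ N\<rfloor> / D ^ N"
  have cy: "c \<le> y"
  proof -
    have "of_int \<lfloor>y * D ^ N\<rfloor> \<le> y * D ^ N" by simp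
    then show ?thesis unfolding c_def using DN by (simp add: divide_le_eq)
  qed
  have yc: "y < c + K"
  proof -
    have "y * D ^ N < of_int \<lfloor>y * D ^ N\<rfloor> + 1" by linarith
    then have "y < (of_int \<lfloor>y * D ^ N\<rfloor> + 1) / D ^ N" using DN by (simp add: less_divide_eq)
    then show ?thesis unfolding c_def K_def by (simp add: add_divide_distrib)
  qed
  define u where "u n = c - K / D ^ n" for n
  define L where "L = 2 * K"
  have L0: "0 < L" unfolding L_def using K by simp
  have Kn: "0 < K / D ^ n" "K / D ^ n \<le> K" for n
    using K D by (auto simp: divide_le_eq one_le_power)
  have D2: "2 \<le> D" unfolding D_def using d by simp
  have LD: "L / D \<le> K" unfolding L_def using K D D2 by (simp add: divide_le_eq)
  have ulo: "y - 2 * K < u n" for n unfolding u_def using Kn[of n] cy yc by linarith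
  have uhi: "u n \<le> y" for n unfolding u_def using Kn[of n] cy by linarith
  have yu: "y \<le> u n + L" for n unfolding u_def L_def using Kn[of n] yc by linarith
  have whi: "u n + L + L / D < y + 3 * K" for n unfolding u_def using Kn[of n] cy LD L_def by linarith
  have "\<epsilon> \<le> (y - \<alpha>) / 4" "\<epsilon> \<le> (\<beta> - y) / 4" "\<epsilon> \<le> \<bar>p - y\<bar> / 4"
    unfolding \<epsilon>_def by (auto simp: divide_right_mono)
  then have e1: "4 * K < y - \<alpha>" "4 * K < \<beta> - y" "4 * K < \<bar>p - y\<bar>"
    using K by (simp_all add: field_simps)
  have ua: "\<alpha> < u n" for n using ulo[of n] e1 K by linarith
  have wb: "u n + L + L / D < \<beta>" for n using whi[of n] e1 K by linarith
  define F where "F n = phi D (u n) L" for n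
  have FT: "F n \<in> HT_T d" for n
    unfolding F_def D_def
  proof (rule phi_HT_T[OF d])
    have "c \<in> dadic d" unfolding c_def dadic_def D_def by blast
    moreover have "K / D ^ n \<in> dadic d"
    proof -
      have "K / D ^ n = of_int 1 / real d ^ (N + n)" unfolding K_def D_def by (simp add: power_add)
      then show ?thesis unfolding dadic_def by blast
    qed
    ultimately show "u n \<in> dadic d" unfolding u_def using dadic_diff[OF d0] by (simp add: D_def)
    have "L = of_int 2 / real d ^ N" unfolding L_def K_def D_def by simp
    then show "L \<in> dadic d" unfolding dadic_def by blast
    show "0 < u n" using ua[of n] a0 by linarith
    show "0 < L" by (rule L0)
    show "u n + L + L / real d < 1" using wb[of n] b1 unfolding D_def by linarith
  qed
  have Fout: "F n z = z" if "z \<notin> {\<alpha><..<\<beta>}" for n z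
  proof -
    from that consider "z \<le> \<alpha>" | "\<beta> \<le> z" by auto
    then show ?thesis
    proof cases
      case 1 then show ?thesis unfolding F_def using phi1[OF D L0] ua[of n] by simp
    next
      case 2 then show ?thesis unfolding F_def using phi2[OF D L0] wb[of n] by simp
    qed
  qed
  have Fp: "F n p = p" for n
  proof (cases "p < y")
    case True
    then have "p \<le> u n" using e1 ulo[of n] K by linarith
    then show ?thesis unfolding F_def using phi1[OF D L0] by simp
  next
    case False
    then have "u n + L + L / D \<le> p" using e1 whi[of n] py K by linarith
    then show ?thesis unfolding F_def using phi2[OF D L0] by simp
  qed
  have Fy: "F n y = u n + (y - u n) / D" for n
    unfolding F_def using phi3[OF D L0 uhi[of n] yu[of n]] .
  have "inj (\<lambda>n. F n y)"
  proof (rule injI)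
    fix n m assume "F n y = F m y"
    then have "u n + (y - u n) / D = u m + (y - u m) / D" using Fy by simp
    then have "(u n - u m) * (1 - 1 / D) = 0" using D by (simp add: field_simps)
    then have "u n - u m = 0 \<or> 1 - 1 / D = 0" by (rule divisors_zero)
    moreover have "1 - 1 / D \<noteq> 0" using D by simp
    ultimately have "u n - u m = 0" by blast
    then have "u n = u m" by simp
    then have "K / D ^ n = K / D ^ m" unfolding u_def by simp
    then have "D ^ n = D ^ m" using K(1) by (simp add: divide_cancel_left)
    then show "n = m" using D by simp
  qed
  moreover have "\<forall>n. F n \<in> HT_T d \<and> (\<forall>z. z \<notin> {\<alpha><..<\<beta>} \<longrightarrow> F n z = z) \<and> F n p = p"
    using FT Fout Fp by simp
  ultimately have "(\<forall>n. F n \<in> HT_T d \<and> (\<forall>z. z \<notin> {\<alpha><..<\<beta>} \<longrightarrow> F n z = z) \<and> F n p = p) \<and> inj (\<lambda>n. F n y)"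
    by (intro conjI)
  then show ?thesis by (rule exI[where x = F])
qed



lemma HTV_facts:
  assumes "f \<in> HT_V d"
  shows "bij f" "\<And>x. x \<in> {0..<1} \<Longrightarrow> f x \<in> {0..<1}" "\<And>x. x \<notin> {0..<1} \<Longrightarrow> f x = x"
    "bij (inv_into UNIV f)" "inv_into UNIV (inv_into UNIV f) = f" "\<And>x. inv_into UNIV f (f x) = x"
proof -
  have bb: "bij_betw f {0..<1} {0..<1}" and fo: "\<forall>x. x \<notin> {0..<1} \<longrightarrow> f x = x"
    using assms unfolding HT_V_iff by auto
  show bf: "bij f" by (rule inv_props(1)[OF bb fo])
  show "\<And>x. x \<in> {0..<1} \<Longrightarrow> f x \<in> {0..<1}" using bb by (meson bij_betwE)
  show "\<And>x. x \<notin> {0..<1} \<Longrightarrow> f x = x" using fo by blast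
  show "bij (inv_into UNIV f)" by (rule inv_props(6)[OF bb fo])
  show "inv_into UNIV (inv_into UNIV f) = f" using bf by (rule inv_inv_eq)
  show "\<And>x. inv_into UNIV f (f x) = x" using bf by (simp add: bij_is_inj)
qed

lemma fix_preserve:
  assumes "f \<in> HT_V d" "\<forall>z\<in>S. f z = z" "x \<in> {0..<1}" "x \<notin> S"
  shows "f x \<in> {0..<1} \<and> f x \<notin> S"
proof
  show "f x \<in> {0..<1}" using HTV_facts(2)[OF assms(1)] assms(3) by simp
  show "f x \<notin> S"
  proof
    assume "f x \<in> S"
    then have "f (f x) = f x" using assms(2) by simp
    then have "f x = x" using HTV_facts(1)[OF assms(1)] by (metis bij_is_inj injD)
    then show False using \<open>f x \<in> S\<close> assms(4) by simp
  qed
qed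

lemma main_general:
  fixes M :: "(real \<Rightarrow> real) monoid" and A J :: "real set" and \<alpha> \<beta> :: real and d :: nat
  assumes d: "d \<ge> 2"
    and mM: "\<And>x y. x \<otimes>\<^bsub>M\<^esub> y = x \<circ> y" and oM: "\<one>\<^bsub>M\<^esub> = id"
    and cV: "carrier M \<subseteq> HT_V d" and Tc: "HT_T d \<subseteq> carrier M"
    and cinv: "\<And>h. h \<in> carrier M \<Longrightarrow> inv_into UNIV h \<in> carrier M"
    and J: "J = {\<alpha>..<\<beta>}" and a0: "0 \<le> \<alpha>" and ab: "\<alpha> < \<beta>" and b1: "\<beta> \<le> 1"
    and AJ: "A \<union> J = {0..<1}" and AJ': "A \<inter> J = {}"
  shows "virtual_centralizer M (fix_on (carrier M) A) = centralizer M (fix_on (carrier M) A)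
       \<and> centralizer M (fix_on (carrier M) A) = fix_on (carrier M) J"
proof -
  define H where "H = fix_on (carrier M) A"
  have minv: "inv\<^bsub>M\<^esub> h = inv_into UNIV h" if "h \<in> carrier M" for h
    using minv_fun[OF that HTV_facts(1)[of h d] cinv[OF that] mM oM] that cV by blast
  have Hc: "h \<in> H \<Longrightarrow> h \<in> carrier M \<and> (\<forall>x\<in>A. h x = x)" for h unfolding H_def fix_on_def by simp
  have a: "fix_on (carrier M) J \<subseteq> centralizer M H"
  proof
    fix g assume "g \<in> fix_on (carrier M) J"
    then have gc: "g \<in> carrier M" and gJ: "\<forall>x\<in>J. g x = x" unfolding fix_on_def by auto
    have gV: "g \<in> HT_V d" using gc cV by auto
    have "inv\<^bsub>M\<^esub> h \<otimes>\<^bsub>M\<^esub> g \<otimes>\<^bsub>M\<^esub> h = g" if h: "h \<in> H" for h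
    proof -
      have hc: "h \<in> carrier M" and hA: "\<forall>x\<in>A. h x = x" using Hc[OF h] by auto
      have hV: "h \<in> HT_V d" using hc cV by auto
      have comm: "g (h x) = h (g x)" for x
      proof (cases "x \<in> {0..<1}")
        case False then show ?thesis using HTV_facts(3)[OF gV] HTV_facts(3)[OF hV] by simp
      next
        case True
        then consider "x \<in> J" "x \<notin> A" | "x \<in> A" "x \<notin> J" using AJ AJ' by blast
        then show ?thesis
        proof cases
          case 1
          have "h x \<in> {0..<1} \<and> h x \<notin> A" using fix_preserve[OF hV hA True 1(2)] .
          then have "h x \<in> J" using AJ by blast
          then show ?thesis using gJ 1 by simp
        next
          case 2
          have "g x \<in> {0..<1} \<and> g x \<notin> J" using fix_preserve[OF gV gJ True 2(2)] .
          then have "g x \<in> A" using AJ by blast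
          then show ?thesis using hA 2 by simp
        qed
      qed
      have "inv\<^bsub>M\<^esub> h \<otimes>\<^bsub>M\<^esub> g \<otimes>\<^bsub>M\<^esub> h = inv_into UNIV h \<circ> g \<circ> h" using minv[OF hc] mM by simp
      also have "\<dots> = g"
      proof
        fix x show "(inv_into UNIV h \<circ> g \<circ> h) x = g x"
          using comm[of x] HTV_facts(6)[OF hV] by simp
      qed
      finally show ?thesis .
    qed
    then show "g \<in> centralizer M H" unfolding centralizer_def using gc by blast
  qed
  have b: "centralizer M H \<subseteq> virtual_centralizer M H"
  proof
    fix g assume "g \<in> centralizer M H"
    then have gc: "g \<in> carrier M" and e: "\<forall>h\<in>H. inv\<^bsub>M\<^esub> h \<otimes>\<^bsub>M\<^esub> g \<otimes>\<^bsub>M\<^esub> h = g"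
      unfolding centralizer_def by auto
    have "{inv\<^bsub>M\<^esub> h \<otimes>\<^bsub>M\<^esub> g \<otimes>\<^bsub>M\<^esub> h | h. h \<in> H} \<subseteq> {g}" using e by auto
    then have "finite {inv\<^bsub>M\<^esub> h \<otimes>\<^bsub>M\<^esub> g \<otimes>\<^bsub>M\<^esub> h | h. h \<in> H}" using finite_subset by blast
    then show "g \<in> virtual_centralizer M H" unfolding virtual_centralizer_def using gc by blast
  qed
  have c: "virtual_centralizer M H \<subseteq> fix_on (carrier M) J"
  proof
    fix g assume "g \<in> virtual_centralizer M H"
    then have gc: "g \<in> carrier M" and fin: "finite {inv\<^bsub>M\<^esub> h \<otimes>\<^bsub>M\<^esub> g \<otimes>\<^bsub>M\<^esub> h | h. h \<in> H}"
      unfolding virtual_centralizer_def by auto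
    define Cs where "Cs = {inv\<^bsub>M\<^esub> h \<otimes>\<^bsub>M\<^esub> g \<otimes>\<^bsub>M\<^esub> h | h. h \<in> H}"
    have gV: "g \<in> HT_V d" using gc cV by auto
    have Jsub: "J \<subseteq> {0..<1}" using AJ by blast
    have IooJ: "{\<alpha><..<\<beta>} \<subseteq> J" unfolding J by auto
    have conj: "\<exists>c :: nat \<Rightarrow> real \<Rightarrow> real. inj c \<and> range c \<subseteq> Cs"
      if F: "\<forall>n. F n \<in> HT_T d \<and> (\<forall>z. z \<notin> {\<alpha><..<\<beta>} \<longrightarrow> F n z = z)"
        and key: "\<And>n m. (F n \<circ> g \<circ> inv_into UNIV (F n)) = (F m \<circ> g \<circ> inv_into UNIV (F m)) \<Longrightarrow> n = m"
      for F :: "nat \<Rightarrow> real \<Rightarrow> real"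
    proof -
      define h where "h n = inv_into UNIV (F n)" for n
      have FV: "F n \<in> HT_V d" for n using F unfolding HT_T_def by auto
      have Fc: "F n \<in> carrier M" for n using F Tc by auto
      have hc: "h n \<in> carrier M" for n unfolding h_def using cinv[OF Fc] .
      have hA: "\<forall>x\<in>A. h n x = x" for n
      proof
        fix x assume "x \<in> A"
        then have "x \<notin> {\<alpha><..<\<beta>}" using IooJ AJ' by blast
        then have "F n x = x" using F by blast
        moreover have "inv_into UNIV (F n) (F n x) = x" by (rule HTV_facts(6)[OF FV[of n]])
        ultimately show "h n x = x" unfolding h_def by simp
      qed
      have hH: "h n \<in> H" for n unfolding H_def fix_on_def using hc hA by blast
      have ih: "inv\<^bsub>M\<^esub> (h n) = F n" for n
        using minv[OF hc[of n]] HTV_facts(5)[OF FV[of n]] unfolding h_def by simp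
      define c where "c n = inv\<^bsub>M\<^esub> (h n) \<otimes>\<^bsub>M\<^esub> g \<otimes>\<^bsub>M\<^esub> h n" for n
      have ceq: "c n = F n \<circ> g \<circ> inv_into UNIV (F n)" for n unfolding c_def using ih mM h_def by simp
      have "range c \<subseteq> Cs"
      proof
        fix x assume "x \<in> range c"
        then obtain n where "x = c n" by blast
        then show "x \<in> Cs" unfolding Cs_def c_def using hH[of n] by blast
      qed
      moreover have "inj c"
      proof (rule injI)
        fix n m assume "c n = c m"
        then have "F n \<circ> g \<circ> inv_into UNIV (F n) = F m \<circ> g \<circ> inv_into UNIV (F m)" using ceq by simp
        then show "n = m" by (rule key)
      qed
      ultimately have "inj c \<and> range c \<subseteq> Cs" by (intro conjI)
      then show ?thesis by (rule exI[where x = c])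
    qed
    have noinj: "\<not> (inj c \<and> range c \<subseteq> Cs)" for c :: "nat \<Rightarrow> real \<Rightarrow> real"
    proof
      assume "inj c \<and> range c \<subseteq> Cs"
      then have "range c \<subseteq> Cs" "inj c" by auto
      have "finite Cs" using fin unfolding Cs_def .
      then have "finite (range c)" using \<open>range c \<subseteq> Cs\<close> by (rule finite_subset[rotated])
      then have "finite (UNIV :: nat set)" using \<open>inj c\<close> by (rule finite_imageD)
      then show False by simp
    qed
    show "g \<in> fix_on (carrier M) J"
    proof (rule ccontr)
      assume "g \<notin> fix_on (carrier M) J"
      then obtain x1 where x1J: "x1 \<in> J" and gx1: "g x1 \<noteq> x1" unfolding fix_on_def using gc by auto
      obtain pa pn pk pb where pw: "pwdata d g pa pn pk pb" using gV unfolding HT_V_iff by auto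
      have x101: "x1 \<in> {0..<1}" using x1J Jsub by auto
      obtain i where i: "i < pn" "pa i \<le> x1" "x1 < pa (Suc i)"
        using part_exists[of pa x1 pn] x101 pw unfolding pwdata_def by auto
      define s where "s = real d powi pk i"
      define m1 where "m1 = min (pa (Suc i)) \<beta>"
      have x1m: "x1 < m1" unfolding m1_def using i x1J J by auto
      have gpc: "g x = s * x + pb i" if "x1 \<le> x" "x < m1" for x
        using pw i that unfolding pwdata_def s_def m1_def by auto
      define q1 where "q1 = - pb i / (s - 1)"
      define q2 where "q2 = inv_into UNIV g \<alpha>"
      have "infinite {x1<..<m1}" using x1m by simp
      then have "\<not> {x1<..<m1} \<subseteq> {q1, q2}" using finite_subset by blast
      then obtain x0 where x0': "x0 \<in> {x1<..<m1}" "x0 \<notin> {q1, q2}" by blast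
      then have x0: "x1 < x0" "x0 < m1" "x0 \<noteq> q1" "x0 \<noteq> q2" by auto
      have gx0: "g x0 \<noteq> x0"
      proof
        assume e: "g x0 = x0"
        then have e2: "s * x0 + pb i = x0" using gpc x0 by simp
        show False
        proof (cases "s = 1")
          case True
          then have "pb i = 0" using e2 by simp
          then have "g x1 = x1" using gpc[of x1] x1m True by simp
          then show False using gx1 by simp
        next
          case False
          then have "x0 = q1" unfolding q1_def using e2 by (simp add: field_simps)
          then show False using x0 by simp
        qed
      qed
      have gx0a: "g x0 \<noteq> \<alpha>"
      proof
        assume "g x0 = \<alpha>"
        moreover have "inv_into UNIV g (g x0) = x0" by (rule HTV_facts(6)[OF gV])
        ultimately have "x0 = q2" unfolding q2_def by simp
        then show False using x0 by simp
      qed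
      have x0ab: "\<alpha> < x0" "x0 < \<beta>" using x0 x1J J m1_def by auto
      have x001: "x0 \<in> {0..<1}" using x0ab a0 b1 by auto
      have gx001: "g x0 \<in> {0..<1}" using HTV_facts(2)[OF gV x001] .
      show False
      proof (cases "g x0 \<in> A")
        case True
        have m1x: "-1 \<noteq> x0" using x0ab a0 by simp
        obtain F :: "nat \<Rightarrow> real \<Rightarrow> real" where FF: "(\<forall>n. F n \<in> HT_T d \<and> (\<forall>z. z \<notin> {\<alpha><..<\<beta>} \<longrightarrow> F n z = z) \<and> F n (-1) = -1) \<and> inj (\<lambda>n. F n x0)"
          using family[OF d a0 x0ab(1) x0ab(2) b1 m1x] by (rule exE)
        have F: "\<forall>n. F n \<in> HT_T d \<and> (\<forall>z. z \<notin> {\<alpha><..<\<beta>} \<longrightarrow> F n z = z) \<and> F n (-1) = -1"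
          and Finj: "inj (\<lambda>n. F n x0)" using FF by simp_all
        have gx0out: "g x0 \<notin> {\<alpha><..<\<beta>}" using True IooJ AJ' by blast
        have FV: "F n \<in> HT_V d" for n using F unfolding HT_T_def by auto
        have key: "n = m" if e: "(F n \<circ> g \<circ> inv_into UNIV (F n)) = (F m \<circ> g \<circ> inv_into UNIV (F m))" for n m
        proof -
          have v: "(F k \<circ> g \<circ> inv_into UNIV (F k)) (F k x0) = g x0" for k
            using HTV_facts(6)[OF FV[of k]] F gx0out by simp
          have "(F n \<circ> g \<circ> inv_into UNIV (F n)) (F n x0) = (F n \<circ> g \<circ> inv_into UNIV (F n)) (F m x0)"
            using v[of n] v[of m] e by simp
          moreover have "inj (F n \<circ> g \<circ> inv_into UNIV (F n))"
            using HTV_facts(1)[OF FV[of n]] HTV_facts(1)[OF gV] HTV_facts(4)[OF FV[of n]]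
            by (simp add: bij_is_inj inj_compose)
          ultimately have "F n x0 = F m x0" by (meson injD)
          then show ?thesis using Finj by (meson injD)
        qed
        have Fh: "\<forall>n. F n \<in> HT_T d \<and> (\<forall>z. z \<notin> {\<alpha><..<\<beta>} \<longrightarrow> F n z = z)" using F by simp
        obtain c :: "nat \<Rightarrow> real \<Rightarrow> real" where "inj c \<and> range c \<subseteq> Cs" using conj[OF Fh key] by blast
        then show False using noinj by blast
      next
        case False
        have yJ: "g x0 \<in> J" using False gx001 AJ by blast
        then have yab: "\<alpha> < g x0" "g x0 < \<beta>" using gx0a J by auto
        have m1x: "x0 \<noteq> g x0" using gx0 by simp
        obtain F :: "nat \<Rightarrow> real \<Rightarrow> real" where FF: "(\<forall>n. F n \<in> HT_T d \<and> (\<forall>z. z \<notin> {\<alpha><..<\<beta>} \<longrightarrow> F n z = z) \<and> F n x0 = x0) \<and> inj (\<lambda>n. F n (g x0))"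
          using family[OF d a0 yab(1) yab(2) b1 m1x] by (rule exE)
        have F: "\<forall>n. F n \<in> HT_T d \<and> (\<forall>z. z \<notin> {\<alpha><..<\<beta>} \<longrightarrow> F n z = z) \<and> F n x0 = x0"
          and Finj: "inj (\<lambda>n. F n (g x0))" using FF by simp_all
        have FV: "F n \<in> HT_V d" for n using F unfolding HT_T_def by auto
        have key: "n = m" if e: "(F n \<circ> g \<circ> inv_into UNIV (F n)) = (F m \<circ> g \<circ> inv_into UNIV (F m))" for n m
        proof -
          have v: "(F k \<circ> g \<circ> inv_into UNIV (F k)) x0 = F k (g x0)" for k
          proof -
            have "inv_into UNIV (F k) (F k x0) = x0" by (rule HTV_facts(6)[OF FV[of k]])
            then have "inv_into UNIV (F k) x0 = x0" using F by simp
            then show ?thesis by simp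
          qed
          have "F n (g x0) = F m (g x0)" using v[of n] v[of m] e by simp
          then show ?thesis using Finj by (meson injD)
        qed
        have Fh: "\<forall>n. F n \<in> HT_T d \<and> (\<forall>z. z \<notin> {\<alpha><..<\<beta>} \<longrightarrow> F n z = z)" using F by simp
        obtain c :: "nat \<Rightarrow> real \<Rightarrow> real" where "inj c \<and> range c \<subseteq> Cs" using conj[OF Fh key] by blast
        then show False using noinj by blast
      qed
    qed
  qed
  have "virtual_centralizer M H = centralizer M H" using a b c by blast
  moreover have "centralizer M H = fix_on (carrier M) J" using a b c by blast
  ultimately show ?thesis unfolding H_def by simp
qed

theorem lemma5p9:
  fixes d :: nat
  assumes "d \<ge> 2"
  shows
   "virtual_centralizer (Vgrp d) (fix_on (HT_V d) {0..<1/d})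
       = centralizer (Vgrp d) (fix_on (HT_V d) {0..<1/d})
    \<and> centralizer (Vgrp d) (fix_on (HT_V d) {0..<1/d}) = fix_on (HT_V d) {1/d..<1}
    \<and> virtual_centralizer (Vgrp d) (fix_on (HT_V d) {1/d..<1})
       = centralizer (Vgrp d) (fix_on (HT_V d) {1/d..<1})
    \<and> centralizer (Vgrp d) (fix_on (HT_V d) {1/d..<1}) = fix_on (HT_V d) {0..<1/d}
    \<and> virtual_centralizer (Tgrp d) (fix_on (HT_T d) {0..<1/d})
       = centralizer (Tgrp d) (fix_on (HT_T d) {0..<1/d})
    \<and> centralizer (Tgrp d) (fix_on (HT_T d) {0..<1/d}) = fix_on (HT_T d) {1/d..<1}
    \<and> virtual_centralizer (Tgrp d) (fix_on (HT_T d) {1/d..<1})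
       = centralizer (Tgrp d) (fix_on (HT_T d) {1/d..<1})
    \<and> centralizer (Tgrp d) (fix_on (HT_T d) {1/d..<1}) = fix_on (HT_T d) {0..<1/d}"
proof -
  have d0: "d > 0" using assms by simp
  have q: "0 < 1 / real d" "1 / real d < 1" using assms by auto
  have TV: "HT_T d \<subseteq> HT_V d" unfolding HT_T_def by auto
  have gen: "{0..<r} \<union> {r..<1} = {0..<1::real}" if "0 < r" "r < 1" for r :: real using that by auto
  have s1: "{0..<1 / real d} \<union> {1 / real d..<1} = {0..<1::real}" using gen[OF q] .
  have s2: "{1 / real d..<1} \<union> {0..<1 / real d} = {0..<1::real}" using gen[OF q] by blast
  have i1: "{0..<1 / real d} \<inter> {1 / real d..<1::real} = {}" by auto
  have i2: "{1 / real d..<1::real} \<inter> {0..<1 / real d} = {}" by auto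
  have V: "\<And>h. h \<in> carrier (Vgrp d) \<Longrightarrow> inv_into UNIV h \<in> carrier (Vgrp d)"
    using HT_V_inv[OF d0] by (simp add: Vgrp_simps)
  have T: "\<And>h. h \<in> carrier (Tgrp d) \<Longrightarrow> inv_into UNIV h \<in> carrier (Tgrp d)"
    using HT_T_inv[OF d0] by (simp add: Tgrp_simps)
  have cV: "carrier (Vgrp d) \<subseteq> HT_V d" "HT_T d \<subseteq> carrier (Vgrp d)" using TV by (simp_all add: Vgrp_simps)
  have cT: "carrier (Tgrp d) \<subseteq> HT_V d" "HT_T d \<subseteq> carrier (Tgrp d)" using TV by (simp_all add: Tgrp_simps)
  have 1: "virtual_centralizer (Vgrp d) (fix_on (carrier (Vgrp d)) {0..<1/d}) = centralizer (Vgrp d) (fix_on (carrier (Vgrp d)) {0..<1/d})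
       \<and> centralizer (Vgrp d) (fix_on (carrier (Vgrp d)) {0..<1/d}) = fix_on (carrier (Vgrp d)) {1/d..<1}"
    by (rule main_general[OF assms Vgrp_simps(1) Vgrp_simps(2) cV V refl]) (use q s1 i1 in auto)
  have 2: "virtual_centralizer (Vgrp d) (fix_on (carrier (Vgrp d)) {1/d..<1}) = centralizer (Vgrp d) (fix_on (carrier (Vgrp d)) {1/d..<1})
       \<and> centralizer (Vgrp d) (fix_on (carrier (Vgrp d)) {1/d..<1}) = fix_on (carrier (Vgrp d)) {0..<1/d}"
    by (rule main_general[OF assms Vgrp_simps(1) Vgrp_simps(2) cV V refl]) (use q s2 i2 in auto)
  have 3: "virtual_centralizer (Tgrp d) (fix_on (carrier (Tgrp d)) {0..<1/d}) = centralizer (Tgrp d) (fix_on (carrier (Tgrp d)) {0..<1/d})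
       \<and> centralizer (Tgrp d) (fix_on (carrier (Tgrp d)) {0..<1/d}) = fix_on (carrier (Tgrp d)) {1/d..<1}"
    by (rule main_general[OF assms Tgrp_simps(1) Tgrp_simps(2) cT T refl]) (use q s1 i1 in auto)
  have 4: "virtual_centralizer (Tgrp d) (fix_on (carrier (Tgrp d)) {1/d..<1}) = centralizer (Tgrp d) (fix_on (carrier (Tgrp d)) {1/d..<1})
       \<and> centralizer (Tgrp d) (fix_on (carrier (Tgrp d)) {1/d..<1}) = fix_on (carrier (Tgrp d)) {0..<1/d}"
    by (rule main_general[OF assms Tgrp_simps(1) Tgrp_simps(2) cT T refl]) (use q s2 i2 in auto)
  show ?thesis using 1 2 3 4 by (simp add: Vgrp_simps Tgrp_simps)
qed

end
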